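(* Let $q > 0$ and let $m \geq 1$ be an integer. Then \[ \sum_{n=m}^{\lfloor m^2/q \rfloor} \Phi_{n,m}^2 \leq 4\, \frac{m^2}{q}\, e^{-q}. \]
   Context: For integers $n \ge m \ge 1$, $\Phi_{n,m} := \min_{p \in \Pi_m} \max_{|x| \leq 1} |x^n - p(x)|$, where $\Pi_m$ is the set of polynomials with real coefficients of degree at most $m$ and the maximum is over real $x \in [-1,1]$. An empty sum is zero. *)

theory Defs
  imports "HOL-Analysis.Analysis" "HOL-Computational_Algebra.Polynomial"
begin

text \<open>The minimum over polynomials is rendered as an infimum (it is attained), and the
  maximum over [-1,1] as a supremum (attained by continuity and compactness).\<close>
definition Phi :: "nat \<Rightarrow> nat \<Rightarrow> real" where
  "Phi n m = Inf {Sup ((\<lambda>x. \<bar>x ^ n - poly p x\<bar>) ` {-1..1}) | p :: real poly. degree p \<le> m}"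

end

theory Submission
  imports Defs
begin

fun T :: "nat \<Rightarrow> real poly" where
  "T 0 = 1"
| "T (Suc 0) = [:0, 1:]"
| "T (Suc (Suc k)) = [:0, 2:] * T (Suc k) - T k"

lemma degree_T: "degree (T k) \<le> k"
proof (induction k rule: T.induct)
  case (3 k)
  have "degree ([:0, 2:] * T (Suc k)) \<le> Suc (Suc k)"
    using degree_mult_le[of "[:0, 2:]" "T (Suc k)"] 3(1) by auto
  moreover have "degree (T k) \<le> Suc (Suc k)" using 3(2) by simp
  ultimately show ?case unfolding T.simps by (rule degree_diff_le)
qed auto

lemma poly_T_cos: "poly (T k) (cos t) = cos (real k * t)"
proof (induction k rule: T.induct)
  case (3 k)
  have "cos (real (Suc (Suc k)) * t) = cos ((real (Suc k)) * t + t)"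
    by (simp add: algebra_simps)
  moreover have "cos (real k * t) = cos ((real (Suc k)) * t - t)"
    by (simp add: algebra_simps)
  ultimately show ?case using 3 by (simp add: cos_add cos_diff)
qed auto

lemma cos_power_expand:
  "cos t ^ n = (\<Sum>j\<le>n. real (n choose j) * cos ((real n - 2 * real j) * t)) / 2 ^ n"
proof -
  have e: "complex_of_real (2 * cos t) = cis (-t) + cis t"
    by (simp add: cis.ctr complex_eq_iff)
  have "complex_of_real ((2 * cos t) ^ n) = (cis (-t) + cis t) ^ n"
    by (simp only: of_real_power e)
  also have "\<dots> = (\<Sum>j\<le>n. of_nat (n choose j) * cis (-t) ^ j * cis t ^ (n - j))"
    by (rule binomial_ring)
  also have "\<dots> = (\<Sum>j\<le>n. of_nat (n choose j) * cis ((real n - 2 * real j) * t))"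
  proof (rule sum.cong[OF refl])
    fix j assume "j \<in> {..n}"
    then have "j \<le> n" by simp
    have "cis (-t) ^ j * cis t ^ (n - j) = cis (real j * (-t) + real (n - j) * t)"
      by (simp only: Complex.DeMoivre cis_mult)
    also have "real j * (-t) + real (n - j) * t = (real n - 2 * real j) * t"
      using \<open>j \<le> n\<close> by (simp add: of_nat_diff algebra_simps)
    finally show "of_nat (n choose j) * cis (-t) ^ j * cis t ^ (n - j) = of_nat (n choose j) * cis ((real n - 2 * real j) * t)"
      by (simp add: mult.assoc)
  qed
  finally have "Re (complex_of_real ((2 * cos t) ^ n)) = Re (\<Sum>j\<le>n. of_nat (n choose j) * cis ((real n - 2 * real j) * t))"
    by simp
  then have "(2 * cos t) ^ n = (\<Sum>j\<le>n. real (n choose j) * cos ((real n - 2 * real j) * t))"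
    by (simp add: Re_sum)
  then show ?thesis by (simp add: power_mult_distrib field_simps)
qed

lemma bdd_img: "bdd_above ((\<lambda>x. \<bar>x ^ n - poly p x\<bar>) ` {-1..1::real})"
proof -
  have c: "continuous_on {-1..1::real} (\<lambda>x. \<bar>x ^ n - poly p x\<bar>)"
    by (intro continuous_intros)
  have "compact ((\<lambda>x. \<bar>x ^ n - poly p x\<bar>) ` {-1..1::real})"
    by (rule compact_continuous_image[OF c compact_Icc])
  then show ?thesis by (intro bounded_imp_bdd_above compact_imp_bounded)
qed

lemma sup_nonneg: "0 \<le> Sup ((\<lambda>x. \<bar>x ^ n - poly p x\<bar>) ` {-1..1::real})"
proof -
  have "(0::real) \<in> {-1..1}" by simp
  then have "\<bar>0 ^ n - poly p 0\<bar> \<in> (\<lambda>x. \<bar>x ^ n - poly p x\<bar>) ` {-1..1::real}" by (rule imageI)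
  then have "\<bar>0 ^ n - poly p 0\<bar> \<le> Sup ((\<lambda>x. \<bar>x ^ n - poly p x\<bar>) ` {-1..1::real})"
    by (rule cSup_upper[OF _ bdd_img])
  then show ?thesis by linarith
qed

lemma Phi_nonneg: "0 \<le> Phi n m"
  unfolding Phi_def
  apply (rule cInf_greatest)
   apply (rule ex_in_conv[THEN iffD1])
   apply (rule exI)
   apply (rule CollectI)
   apply (rule exI[of _ 0])
   apply (rule conjI[OF refl])
   apply simp
  apply (erule CollectE, erule exE, erule conjE)
  apply hypsubst
  apply (rule sup_nonneg)
  done

lemma Phi_le_poly:
  assumes "degree p \<le> m" "\<And>x. x \<in> {-1..1} \<Longrightarrow> \<bar>x ^ n - poly p x\<bar> \<le> E"
  shows "Phi n m \<le> E"
proof -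
  have "Phi n m \<le> Sup ((\<lambda>x. \<bar>x ^ n - poly p x\<bar>) ` {-1..1::real})"
    unfolding Phi_def
    apply (rule cInf_lower)
     apply (rule CollectI)
     apply (rule exI[of _ p])
     apply (rule conjI[OF refl assms(1)])
    apply (unfold bdd_below_def)
    apply (rule exI[of _ 0])
    apply (rule ballI)
    apply (erule CollectE, erule exE, erule conjE)
    apply hypsubst
    apply (rule sup_nonneg)
    done
  also have "\<dots> \<le> E"
  proof (rule cSup_least)
    show "(\<lambda>x. \<bar>x ^ n - poly p x\<bar>) ` {-1..1::real} \<noteq> {}" by simp
    fix y assume "y \<in> (\<lambda>x. \<bar>x ^ n - poly p x\<bar>) ` {-1..1::real}"
    then obtain x where "x \<in> {-1..1}" "y = \<bar>x ^ n - poly p x\<bar>" by blast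
    then show "y \<le> E" using assms(2) by simp
  qed
  finally show ?thesis .
qed

definition dd :: "nat \<Rightarrow> nat \<Rightarrow> nat" where "dd n j = nat \<bar>int n - 2 * int j\<bar>"

definition EE :: "nat \<Rightarrow> nat \<Rightarrow> real" where
  "EE n m = (\<Sum>j\<in>{..n} - {j. dd n j \<le> m}. real (n choose j)) / 2 ^ n"

lemma cos_dd: "cos ((real n - 2 * real j) * t) = cos (real (dd n j) * t)"
proof -
  have "real (dd n j) = \<bar>real n - 2 * real j\<bar>" unfolding dd_def by simp
  moreover have "cos ((real n - 2 * real j) * t) = cos ((2 * real j - real n) * t)"
  proof -
    have "(real n - 2 * real j) * t = - ((2 * real j - real n) * t)" by (simp add: algebra_simps)
    then show ?thesis by (simp only: cos_minus)
  qed
  ultimately show ?thesis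
    by (cases "real n - 2 * real j \<ge> 0") auto
qed

lemma aux_div: "(c::real) * y / d = c / d * y" by simp

lemma Phi_le_EE: "Phi n m \<le> EE n m"
proof -
  define g where "g j x = real (n choose j) / 2 ^ n * poly (T (dd n j)) x" for j x
  define p where "p = (\<Sum>j\<in>{..n} \<inter> {j. dd n j \<le> m}. smult (real (n choose j) / 2 ^ n) (T (dd n j)))"
  have "degree p \<le> m"
    unfolding p_def
  proof (rule degree_sum_le)
    fix j assume "j \<in> {..n} \<inter> {j. dd n j \<le> m}"
    then have "dd n j \<le> m" by simp
    then show "degree (smult (real (n choose j) / 2 ^ n) (T (dd n j))) \<le> m"
      using degree_T[of "dd n j"] degree_smult_le[of "real (n choose j) / 2 ^ n" "T (dd n j)"] by linarith
  qed simp
  moreover have "\<bar>x ^ n - poly p x\<bar> \<le> EE n m" if x: "x \<in> {-1..1}" for x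
  proof -
    define t where "t = arccos x"
    have xt: "x = cos t" unfolding t_def using x by (simp add: cos_arccos)
    have "x ^ n = (\<Sum>j\<le>n. real (n choose j) * cos ((real n - 2 * real j) * t)) / 2 ^ n"
      unfolding xt by (rule cos_power_expand)
    also have "\<dots> = (\<Sum>j\<le>n. g j x)"
      unfolding sum_divide_distrib
    proof (rule sum.cong[OF refl])
      fix j
      have "poly (T (dd n j)) x = cos ((real n - 2 * real j) * t)"
        unfolding cos_dd xt by (rule poly_T_cos)
      then show "real (n choose j) * cos ((real n - 2 * real j) * t) / 2 ^ n = g j x"
        unfolding g_def by (simp only: aux_div)
    qed
    finally have e1: "x ^ n = (\<Sum>j\<le>n. g j x)" .
    have e2: "poly p x = (\<Sum>j\<in>{..n} \<inter> {j. dd n j \<le> m}. g j x)"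
      unfolding p_def g_def by (simp add: poly_sum)
    have "x ^ n - poly p x = (\<Sum>j\<in>{..n} - {j. dd n j \<le> m}. g j x)"
      unfolding e1 e2 using sum.Int_Diff[of "{..n}" "\<lambda>j. g j x" "{j. dd n j \<le> m}"] by simp
    also have "\<bar>\<dots>\<bar> \<le> (\<Sum>j\<in>{..n} - {j. dd n j \<le> m}. \<bar>g j x\<bar>)" by (rule sum_abs)
    also have "\<dots> \<le> (\<Sum>j\<in>{..n} - {j. dd n j \<le> m}. real (n choose j) / 2 ^ n)"
    proof (rule sum_mono)
      fix j
      have "\<bar>g j x\<bar> = real (n choose j) / 2 ^ n * \<bar>cos (real (dd n j) * t)\<bar>"
        by (simp add: g_def xt poly_T_cos abs_mult)
      also have "\<dots> \<le> real (n choose j) / 2 ^ n * 1"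
        by (intro mult_left_mono) auto
      finally show "\<bar>g j x\<bar> \<le> real (n choose j) / 2 ^ n" by simp
    qed
    also have "\<dots> = EE n m" unfolding EE_def by (simp add: sum_divide_distrib)
    finally show ?thesis .
  qed
  ultimately show ?thesis by (rule Phi_le_poly)
qed

lemma fact_double_ge: "2 ^ k * fact k \<le> (fact (2 * k) :: nat)"
proof (induction k)
  case 0 then show ?case by simp
next
  case (Suc k)
  have "fact (2 * Suc k) = (2*k+2) * ((2*k+1) * (fact (2*k) :: nat))"
    by (simp add: algebra_simps)
  also have "\<dots> \<ge> (2*k+2) * (1 * (2 ^ k * fact k))"
    using Suc by (intro mult_le_mono2 mult_le_mono) auto
  also have "(2*k+2) * (1 * (2 ^ k * fact k)) = 2 ^ Suc k * (fact (Suc k) :: nat)"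
    by (simp only: power_Suc fact_Suc of_nat_id) (simp add: algebra_simps)
  finally show ?case .
qed

lemma scaleR_real_div: "(y::real) /\<^sub>R c = y / c" by (simp add: divide_inverse mult.commute)

lemma cosh_term_le:
  "x ^ (2*k) /\<^sub>R fact (2*k) \<le> (x^2/2)^k /\<^sub>R fact k" for x :: real
proof -
  have f: "real (2 ^ k * fact k) \<le> real (fact (2*k))"
    using fact_double_ge[of k] by linarith
  have f': "2 ^ k * fact k \<le> (fact (2*k) :: real)"
    using f by (simp only: of_nat_mult of_nat_power of_nat_fact of_nat_numeral)
  have pos: "0 < (2::real) ^ k * fact k" by simp
  have "x ^ (2*k) /\<^sub>R fact (2*k) = (x^2)^k / fact (2*k)"
    by (simp only: scaleR_real_div power_mult)
  also have "\<dots> \<le> (x^2)^k / (2^k * fact k)"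
    by (rule divide_left_mono[OF f']) (simp_all add: pos)
  also have "\<dots> = (x^2/2)^k /\<^sub>R fact k"
    by (simp only: scaleR_real_div power_divide divide_divide_eq_left)
  finally show ?thesis .
qed

lemma cosh_le_exp_sq: "cosh (x::real) \<le> exp (x^2/2)"
proof -
  let ?f = "\<lambda>k. (x^2/2)^k /\<^sub>R fact k"
  have s1: "?f sums exp (x^2/2)" by (rule exp_converges)
  have s2: "(\<lambda>n. if even n then ?f (n div 2) else (\<lambda>_. 0::real) ((n - 1) div 2)) sums (0 + exp (x^2/2))"
    by (rule sums_if[OF sums_zero s1])
  then have s3: "(\<lambda>n. if even n then ?f (n div 2) else 0) sums exp (x^2/2)"
    by (simp only: add_0_left)
  show ?thesis
  proof (rule sums_le[OF _ cosh_converges[of x] s3])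
    fix n :: nat
    show "(if even n then x ^ n /\<^sub>R fact n else 0) \<le> (if even n then ?f (n div 2) else 0)"
    proof (cases "even n")
      case True
      then obtain k where n: "n = 2*k" by blast
      show ?thesis using True cosh_term_le[where x=x and k=k] by (simp only: n if_True) simp
    qed simp
  qed
qed

lemma binom_exp_sum:
  "(\<Sum>j\<le>n. real (n choose j) * exp (s * (real n - 2 * real j))) = (exp (-s) + exp s) ^ n"
proof -
  have "(exp (-s) + exp s) ^ n = (\<Sum>j\<le>n. real (n choose j) * exp (-s) ^ j * exp s ^ (n - j))"
    by (rule binomial_ring)
  also have "\<dots> = (\<Sum>j\<le>n. real (n choose j) * exp (s * (real n - 2 * real j)))"
  proof (rule sum.cong[OF refl])
    fix j assume "j \<in> {..n}"
    then have jn: "j \<le> n" by simp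
    have "exp (-s) ^ j * exp s ^ (n - j) = exp (real j * (-s)) * exp (real (n - j) * s)"
      by (simp only: exp_of_nat_mult)
    also have "\<dots> = exp (real j * (-s) + real (n - j) * s)" by (rule exp_add[symmetric])
    also have "real j * (-s) + real (n - j) * s = s * (real n - 2 * real j)"
      using jn by (simp add: of_nat_diff algebra_simps)
    finally show "real (n choose j) * exp (-s) ^ j * exp s ^ (n - j) = real (n choose j) * exp (s * (real n - 2 * real j))"
      by (simp add: mult.assoc)
  qed
  finally show ?thesis by simp
qed

lemma aux_distrib: "(c::real) * (x * A + x * B) = x * (c * A) + x * (c * B)"
  by (simp add: algebra_simps)

lemma EE_bound:
  assumes "n \<ge> 1"
  shows "EE n m \<le> 2 * exp (- (real m ^ 2) / (2 * real n))"
proof -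
  define t where "t = real m / real n"
  have t0: "t \<ge> 0" unfolding t_def by simp
  define S where "S = {..n} - {j. dd n j \<le> m}"
  define e where "e j = exp (t * (real n - 2 * real j - real m)) + exp (t * (2 * real j - real n - real m))" for j
  have "(\<Sum>j\<in>S. real (n choose j)) \<le> (\<Sum>j\<in>S. real (n choose j) * e j)"
  proof (rule sum_mono)
    fix j assume "j \<in> S"
    then have "dd n j > m" unfolding S_def by simp
    then have d: "\<bar>real n - 2 * real j\<bar> > real m" unfolding dd_def by linarith
    have "1 \<le> e j"
    proof (cases "real n - 2 * real j > real m")
      case True
      then have "1 \<le> exp (t * (real n - 2 * real j - real m))" using t0 by simp
      then show ?thesis unfolding e_def by (smt (verit) exp_gt_zero)
    next
      case False
      then have "2 * real j - real n - real m \<ge> 0" using d by linarith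
      then have "1 \<le> exp (t * (2 * real j - real n - real m))" using t0 by simp
      then show ?thesis unfolding e_def by (smt (verit) exp_gt_zero)
    qed
    then show "real (n choose j) \<le> real (n choose j) * e j"
      by (simp add: mult_le_cancel_left1)
  qed
  also have "\<dots> \<le> (\<Sum>j\<le>n. real (n choose j) * e j)"
  proof (rule sum_mono2)
    show "finite {..n}" by simp
    show "S \<subseteq> {..n}" unfolding S_def by blast
    fix b
    show "0 \<le> real (n choose b) * e b" unfolding e_def
      by (intro mult_nonneg_nonneg add_nonneg_nonneg) auto
  qed
  also have "\<dots> = (\<Sum>j\<le>n. exp (- t * real m) * (real (n choose j) * exp (t * (real n - 2 * real j))) +
      exp (- t * real m) * (real (n choose j) * exp (- t * (real n - 2 * real j))))"
  proof (rule sum.cong[OF refl])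
    fix j assume "j \<in> {..n}"
    have 1: "exp (t * (real n - 2 * real j - real m)) = exp (- t * real m) * exp (t * (real n - 2 * real j))"
      by (subst exp_add[symmetric], rule arg_cong[where f=exp], simp add: algebra_simps)
    have 2: "exp (t * (2 * real j - real n - real m)) = exp (- t * real m) * exp ((-t) * (real n - 2 * real j))"
      by (subst exp_add[symmetric], rule arg_cong[where f=exp], simp add: algebra_simps)
    show "real (n choose j) * e j =
      exp (- t * real m) * (real (n choose j) * exp (t * (real n - 2 * real j))) +
      exp (- t * real m) * (real (n choose j) * exp (- t * (real n - 2 * real j)))"
      unfolding e_def 1 2 by (rule aux_distrib)
  qed
  also have "\<dots> = exp (- t * real m) * (\<Sum>j\<le>n. real (n choose j) * exp (t * (real n - 2 * real j))) +
      exp (- t * real m) * (\<Sum>j\<le>n. real (n choose j) * exp (- t * (real n - 2 * real j)))"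
    by (simp only: sum.distrib sum_distrib_left)
  also have "\<dots> = exp (- t * real m) * (2 * (exp (-t) + exp t) ^ n)"
    using binom_exp_sum[where s=t] binom_exp_sum[where s="-t"] by (simp add: add.commute)
  also have "\<dots> = exp (- t * real m) * (2 * (2 * cosh t) ^ n)"
  proof -
    have "2 * cosh t = exp (-t) + exp t" by (simp add: cosh_field_def)
    then show ?thesis by simp
  qed
  finally have A0: "(\<Sum>j\<in>S. real (n choose j)) \<le> exp (- t * real m) * (2 * (2 * cosh t) ^ n)" .
  have A1: "exp (- t * real m) * (2 * (2 * cosh t) ^ n) = (2 * exp (- t * real m) * cosh t ^ n) * 2 ^ n"
    by (simp add: power_mult_distrib mult_ac)
  have A: "(\<Sum>j\<in>S. real (n choose j)) / 2 ^ n \<le> 2 * exp (- t * real m) * cosh t ^ n"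
  proof (rule iffD2[OF pos_divide_le_eq])
    show "(0::real) < 2 ^ n" by simp
    show "(\<Sum>j\<in>S. real (n choose j)) \<le> 2 * exp (- t * real m) * cosh t ^ n * 2 ^ n"
      using A0 A1 by linarith
  qed
  have "cosh t ^ n \<le> exp (t^2/2) ^ n"
    by (rule power_mono[OF cosh_le_exp_sq]) simp
  also have "\<dots> = exp (real n * (t^2/2))" by (simp only: exp_of_nat_mult)
  finally have "2 * exp (- t * real m) * cosh t ^ n \<le> 2 * exp (- t * real m) * exp (real n * (t^2/2))"
    by simp
  also have "\<dots> = 2 * exp (- t * real m + real n * (t^2/2))" by (simp only: exp_add)
  also have "- t * real m + real n * (t^2/2) = - (real m ^ 2) / (2 * real n)"
    using assms t_def by (simp add: field_simps power2_eq_square)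
  finally have B: "2 * exp (- t * real m) * cosh t ^ n \<le> 2 * exp (- (real m ^ 2) / (2 * real n))" .
  have "EE n m = (\<Sum>j\<in>S. real (n choose j)) / 2 ^ n" unfolding EE_def S_def ..
  then show ?thesis using A B by linarith
qed

lemma Phi_sq_bound:
  assumes "q > 0" "n \<ge> 1" "real n \<le> real m ^ 2 / q"
  shows "(Phi n m)^2 \<le> 4 * exp (- q)"
proof -
  have n0: "real n > 0" using assms(2) by simp
  have qn: "q \<le> real m ^ 2 / real n"
    using assms(1,3) n0 by (simp add: field_simps)
  have P: "0 \<le> Phi n m" "Phi n m \<le> 2 * exp (- (real m ^ 2) / (2 * real n))"
    using Phi_nonneg[of n m] Phi_le_EE[of n m] EE_bound[OF assms(2), of m] by linarith+
  have "(Phi n m)^2 \<le> (2 * exp (- (real m ^ 2) / (2 * real n)))^2"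
    using P by (intro power_mono) auto
  also have "\<dots> = 4 * exp (- (real m ^ 2) / real n)"
  proof -
    have "exp (- (real m ^ 2) / (2 * real n)) ^ 2 = exp (2 * (- (real m ^ 2) / (2 * real n)))"
      by (simp only: exp_of_nat_mult[symmetric] of_nat_numeral)
    also have "2 * (- (real m ^ 2) / (2 * real n)) = - (real m ^ 2) / real n" by simp
    finally show ?thesis by (simp add: power_mult_distrib)
  qed
  also have "\<dots> \<le> 4 * exp (- q)" using qn by simp
  finally show ?thesis .
qed

lemma aux_comm: "(a::real) * (4 * b) = 4 * a * b" by simp

theorem lemma2:
  fixes q :: real and m :: nat
  assumes "q > 0" and "m \<ge> 1"
  shows "(\<Sum>n = m..nat \<lfloor>real m ^ 2 / q\<rfloor>. (Phi n m)^2) \<le> 4 * (real m ^ 2 / q) * exp (- q)"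
proof -
  define N where "N = nat \<lfloor>real m ^ 2 / q\<rfloor>"
  have Nle: "real N \<le> real m ^ 2 / q"
  proof -
    have y0: "0 \<le> real m ^ 2 / q" using assms(1) by simp
    then have "real N = real_of_int \<lfloor>real m ^ 2 / q\<rfloor>" unfolding N_def
      by (intro of_nat_nat) simp
    then show ?thesis using of_int_floor_le[of "real m ^ 2 / q"] by linarith
  qed
  have "(\<Sum>n = m..N. (Phi n m)^2) \<le> of_nat (card {m..N}) * (4 * exp (- q))"
  proof (rule sum_bounded_above)
    fix n assume "n \<in> {m..N}"
    then have "n \<ge> 1" "real n \<le> real m ^ 2 / q" using assms(2) Nle by auto
    then show "(Phi n m)^2 \<le> 4 * exp (- q)" using Phi_sq_bound[OF assms(1)] by blast
  qed
  also have "real (card {m..N}) \<le> real m ^ 2 / q"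
  proof (cases "m \<le> N")
    case True
    then have "card {m..N} = N + 1 - m" by simp
    then have "real (card {m..N}) \<le> real N" using assms(2) True by simp
    then show ?thesis using Nle by linarith
  next
    case False
    then show ?thesis using assms(1) by simp
  qed
  then have "real (card {m..N}) * (4 * exp (- q)) \<le> real m ^ 2 / q * (4 * exp (- q))"
    by (intro mult_right_mono) auto
  finally have X: "(\<Sum>n = m..N. (Phi n m)^2) \<le> real m ^ 2 / q * (4 * exp (- q))" .
  have eq: "real m ^ 2 / q * (4 * exp (- q)) = 4 * (real m ^ 2 / q) * exp (- q)"
    by (rule aux_comm)
  show ?thesis using X unfolding N_def eq .
qed

end
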